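(* Let $0<\underline{s}<\overline{s}<1$, $p\in(0,1)$, $u,v>0$ with $u\ne v$, with $\mathcal{E}_0\neq\emptyset$, and fix $\varepsilon_0>0$ and $n\in\mathbb{N}$. Let $F_n$ be the set of $f\in F^\infty_{(\underline{s},\overline{s})}$ whose stationary set $$S_f=\{c\in C_{\varepsilon_0}: G_f(\lambda,0)=G_f(\lambda,c)=0 \text{ for some }\lambda\in\mathcal{E}_0\cap\mathcal{E}_c\}$$ has Lebesgue measure at least $\frac1n$, and let $\overline{F}_n$ be its closure in $F^\infty_{(\underline{s},\overline{s})}$ (for the $L_\infty$-norm). If $f\in\overline{F}_n$, then there exists $S\subset C_{\varepsilon_0}$ with Lebesgue measure $m(S)\ge\frac1n$ such that for every $c\in S$ the system $G_f(\lambda,0)=G_f(\lambda,c)=0$ has a solution $\lambda\in\overline{\mathcal{E}}_0\cap\overline{\mathcal{E}}_c$.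
   Context: $F^\infty_{(\underline{s},\overline{s})}=\{f\in L_\infty(\underline{s},\overline{s})\cap C^0(\underline{s},\overline{s}): \int_{\underline{s}}^{\overline{s}} f(s)\frac{1-2s}{s}ds=0,\ \int_{\underline{s}}^{\overline{s}} f=1,\ f\ge0,\ f(s)\frac{1-s}{s}\in L_\infty(\underline{s},\overline{s})\}$ with the $L_\infty$-norm topology. For $\lambda>0$, $c\in(-1,u)\cap(-v,1)$: $m(\lambda,c)=\frac{\lambda(1+c)}{\lambda(1+c)+(u-c)}$, $mm(\lambda,c)=\frac{\lambda(1-c)}{\lambda(1-c)+(v+c)}$; $\mathcal{E}_c=\{\lambda>0: m(\lambda,c),mm(\lambda,c)\in(\underline{s},\overline{s})\}$, and $\overline{\mathcal{E}}_c$ denotes its closure in $\mathbb{R}$. $C=\{c\in(-1,u)\cap(-v,1):\mathcal{E}_c\ne\emptyset\}\setminus\{0\}$, $C_{\varepsilon_0}=C\cap(-1+\varepsilon_0,u-\varepsilon_0)\cap(-v+\varepsilon_0,1-\varepsilon_0)$. For $\lambda$ with $m(\lambda,c),mm(\lambda,c)\in[\underline{s},\overline{s}]$, $G_f(\lambda,c)=p\int_{\underline{s}}^{m(\lambda,c)} f(s)\frac{1-2s}{s}ds+(1-p)\int_{mm(\lambda,c)}^{\overline{s}} f(s)\frac{1-2s}{s}ds$. *)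

theory Defs
  imports "HOL-Analysis.Analysis"
begin

text \<open>Functions f are real functions; only their values on the open interval (sl, su) matter.
  L-infinity norm of a continuous function on the open interval = its supremum.\<close>

definition linf_dist :: "real \<Rightarrow> real \<Rightarrow> (real \<Rightarrow> real) \<Rightarrow> (real \<Rightarrow> real) \<Rightarrow> real" where
  "linf_dist sl su f g = Sup ((\<lambda>s. \<bar>f s - g s\<bar>) ` {sl<..<su})"

definition Finf :: "real \<Rightarrow> real \<Rightarrow> (real \<Rightarrow> real) set" where
  "Finf sl su = {f.
     bounded (f ` {sl<..<su}) \<and> continuous_on {sl<..<su} f \<and>
     f integrable_on {sl..su} \<and> (\<lambda>s. f s * (1 - 2 * s) / s) integrable_on {sl..su} \<and>
     integral {sl..su} (\<lambda>s. f s * (1 - 2 * s) / s) = 0 \<and>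
     integral {sl..su} f = 1 \<and>
     (\<forall>s\<in>{sl<..<su}. f s \<ge> 0) \<and>
     bounded ((\<lambda>s. f s * (1 - s) / s) ` {sl<..<su})}"

definition mfun :: "real \<Rightarrow> real \<Rightarrow> real \<Rightarrow> real" where
  "mfun u lam c = lam * (1 + c) / (lam * (1 + c) + (u - c))"

definition mmfun :: "real \<Rightarrow> real \<Rightarrow> real \<Rightarrow> real" where
  "mmfun v lam c = lam * (1 - c) / (lam * (1 - c) + (v + c))"

definition Eset :: "real \<Rightarrow> real \<Rightarrow> real \<Rightarrow> real \<Rightarrow> real \<Rightarrow> real set" where
  "Eset sl su u v c = {lam. lam > 0 \<and> mfun u lam c \<in> {sl<..<su} \<and> mmfun v lam c \<in> {sl<..<su}}"

definition Cset :: "real \<Rightarrow> real \<Rightarrow> real \<Rightarrow> real \<Rightarrow> real set" where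
  "Cset sl su u v = {c. c \<in> {-1<..<u} \<inter> {-v<..<1} \<and> Eset sl su u v c \<noteq> {}} - {0}"

definition Ceps :: "real \<Rightarrow> real \<Rightarrow> real \<Rightarrow> real \<Rightarrow> real \<Rightarrow> real set" where
  "Ceps sl su u v eps0 = Cset sl su u v \<inter> {-1+eps0<..<u-eps0} \<inter> {-v+eps0<..<1-eps0}"

definition Gf :: "real \<Rightarrow> real \<Rightarrow> real \<Rightarrow> real \<Rightarrow> real \<Rightarrow> (real \<Rightarrow> real) \<Rightarrow> real \<Rightarrow> real \<Rightarrow> real" where
  "Gf sl su p u v f lam c =
     p * integral {sl..mfun u lam c} (\<lambda>s. f s * (1 - 2 * s) / s)
     + (1 - p) * integral {mmfun v lam c..su} (\<lambda>s. f s * (1 - 2 * s) / s)"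

definition stationary_set :: "real \<Rightarrow> real \<Rightarrow> real \<Rightarrow> real \<Rightarrow> real \<Rightarrow> real \<Rightarrow> (real \<Rightarrow> real) \<Rightarrow> real set" where
  "stationary_set sl su p u v eps0 f = {c \<in> Ceps sl su u v eps0.
     \<exists>lam \<in> Eset sl su u v 0 \<inter> Eset sl su u v c.
       Gf sl su p u v f lam 0 = 0 \<and> Gf sl su p u v f lam c = 0}"

definition Fn :: "real \<Rightarrow> real \<Rightarrow> real \<Rightarrow> real \<Rightarrow> real \<Rightarrow> real \<Rightarrow> nat \<Rightarrow> (real \<Rightarrow> real) set" where
  "Fn sl su p u v eps0 n = {f \<in> Finf sl su.
     stationary_set sl su p u v eps0 f \<in> sets lebesgue \<and>
     emeasure lebesgue (stationary_set sl su p u v eps0 f) \<ge> ennreal (1 / real n)}"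

definition linf_closure :: "real \<Rightarrow> real \<Rightarrow> (real \<Rightarrow> real) set \<Rightarrow> (real \<Rightarrow> real) set" where
  "linf_closure sl su A = {f \<in> Finf sl su. \<forall>e>0. \<exists>g\<in>A. linf_dist sl su f g < e}"

end

theory Submission
  imports Defs
begin

lemma dist_bound:
  assumes "f \<in> Finf sl su" "g \<in> Finf sl su" "s \<in> {sl<..<su}"
  shows "\<bar>f s - g s\<bar> \<le> linf_dist sl su f g"
proof -
  from assms(1) have "bounded (f ` {sl<..<su})" by (simp add: Finf_def)
  then obtain B1 where B1: "\<forall>x\<in>{sl<..<su}. \<bar>f x\<bar> \<le> B1" by (auto simp: bounded_real)
  from assms(2) have "bounded (g ` {sl<..<su})" by (simp add: Finf_def)
  then obtain B2 where B2: "\<forall>x\<in>{sl<..<su}. \<bar>g x\<bar> \<le> B2" by (auto simp: bounded_real)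
  have "bdd_above ((\<lambda>s. \<bar>f s - g s\<bar>) ` {sl<..<su})"
  proof (rule bdd_aboveI2)
    fix x assume "x \<in> {sl<..<su}"
    then show "\<bar>f x - g x\<bar> \<le> B1 + B2" using B1 B2 by force
  qed
  then show ?thesis unfolding linf_dist_def using assms(3) by (intro cSup_upper) auto
qed

lemma int_diff_bound:
  assumes "f \<in> Finf sl su" "g \<in> Finf sl su" "0 < sl" "su < 1"
    and "sl \<le> a" "a \<le> b" "b \<le> su"
  shows "\<bar>integral {a..b} (\<lambda>s. g s * (1 - 2 * s) / s) - integral {a..b} (\<lambda>s. f s * (1 - 2 * s) / s)\<bar>
          \<le> linf_dist sl su f g * (su - sl) / sl"
proof -
  define D where "D = linf_dist sl su f g"
  have sub: "{a..b} \<subseteq> {sl..su}" using assms by auto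
  have if1: "(\<lambda>s. f s * (1 - 2 * s) / s) integrable_on {a..b}"
    using assms(1) sub by (auto simp: Finf_def intro: integrable_on_subinterval)
  have ig1: "(\<lambda>s. g s * (1 - 2 * s) / s) integrable_on {a..b}"
    using assms(2) sub by (auto simp: Finf_def intro: integrable_on_subinterval)
  define h where "h = (\<lambda>s. g s * (1 - 2 * s) / s - f s * (1 - 2 * s) / s)"
  have hi: "h integrable_on {a..b}" unfolding h_def by (rule integrable_diff[OF ig1 if1])
  have eq: "integral {a..b} (\<lambda>s. g s * (1 - 2 * s) / s) - integral {a..b} (\<lambda>s. f s * (1 - 2 * s) / s)
      = integral {a..b} h" unfolding h_def using integral_diff[OF ig1 if1] by simp
  have hi': "h integrable_on {a<..<b}" using hi has_integral_Icc_iff_Ioo by blast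
  have "integral {a..b} h = integral {a<..<b} h" by (rule integral_open_interval_real)
  have pt: "norm (h s) \<le> D / sl" if s: "s \<in> {a<..<b}" for s
  proof -
    have s2: "s \<in> {sl<..<su}" using s assms by auto
    have d: "\<bar>g s - f s\<bar> \<le> D" using dist_bound[OF assms(1,2) s2] unfolding D_def by linarith
    have hs: "h s = (g s - f s) * ((1 - 2 * s) / s)" unfolding h_def by (simp add: diff_divide_distrib[symmetric] left_diff_distrib)
    have spos: "s > 0" using s2 assms by auto
    have q: "\<bar>(1 - 2 * s) / s\<bar> \<le> 1 / sl"
    proof -
      have "\<bar>1 - 2 * s\<bar> \<le> 1" using s2 assms by auto
      then have "\<bar>(1 - 2 * s) / s\<bar> \<le> 1 / s" using spos by (simp add: abs_div divide_right_mono)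
      also have "\<dots> \<le> 1 / sl" using s2 assms by (auto intro: divide_left_mono)
      finally show ?thesis .
    qed
    have "norm (h s) = \<bar>g s - f s\<bar> * \<bar>(1 - 2 * s) / s\<bar>" unfolding hs by (simp add: abs_mult)
    also have "\<dots> \<le> D * (1 / sl)" using d q by (intro mult_mono) auto
    finally show ?thesis by simp
  qed
  have "norm (integral {a<..<b} h) \<le> integral {a<..<b} (\<lambda>s. D / sl)"
    by (rule integral_norm_bound_integral[OF hi' _ pt]) (auto intro: integrable_on_const simp del: greaterThanLessThan_iff)
  also have "\<dots> = (b - a) * (D / sl)"
    using integral_open_interval_real[of a b "\<lambda>s. D / sl"] assms by simp
  also have "\<dots> \<le> (su - sl) * (D / sl)"
  proof -
    show ?thesis
    proof (cases "sl < su")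
      case True
      have "D \<ge> 0" using dist_bound[OF assms(1,2), of "(sl+su)/2"] True unfolding D_def by auto
      then show ?thesis using assms by (intro mult_right_mono) auto
    next
      case False
      then have "a = b" "su = sl" using assms by auto
      then show ?thesis by simp
    qed
  qed
  finally show ?thesis using eq \<open>integral {a..b} h = integral {a<..<b} h\<close> unfolding D_def by (simp add: mult.commute)
qed


lemma Gf_bound:
  assumes "f \<in> Finf sl su" "g \<in> Finf sl su" "0 < sl" "su < 1" "0 \<le> p" "p \<le> 1"
    and "mfun u lam c \<in> {sl..su}" "mmfun v lam c \<in> {sl..su}"
  shows "\<bar>Gf sl su p u v g lam c - Gf sl su p u v f lam c\<bar> \<le> linf_dist sl su f g * (su - sl) / sl"
proof -
  define K where "K = linf_dist sl su f g * (su - sl) / sl"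
  have A: "\<bar>integral {sl..mfun u lam c} (\<lambda>s. g s * (1 - 2 * s) / s) - integral {sl..mfun u lam c} (\<lambda>s. f s * (1 - 2 * s) / s)\<bar> \<le> K"
    unfolding K_def using assms by (intro int_diff_bound) auto
  have B: "\<bar>integral {mmfun v lam c..su} (\<lambda>s. g s * (1 - 2 * s) / s) - integral {mmfun v lam c..su} (\<lambda>s. f s * (1 - 2 * s) / s)\<bar> \<le> K"
    unfolding K_def using assms by (intro int_diff_bound) auto
  define X where "X = integral {sl..mfun u lam c} (\<lambda>s. g s * (1 - 2 * s) / s) - integral {sl..mfun u lam c} (\<lambda>s. f s * (1 - 2 * s) / s)"
  define Y where "Y = integral {mmfun v lam c..su} (\<lambda>s. g s * (1 - 2 * s) / s) - integral {mmfun v lam c..su} (\<lambda>s. f s * (1 - 2 * s) / s)"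
  have "Gf sl su p u v g lam c - Gf sl su p u v f lam c = p * X + (1 - p) * Y"
    unfolding Gf_def X_def Y_def by (simp add: algebra_simps)
  also have "\<bar>\<dots>\<bar> \<le> p * \<bar>X\<bar> + (1 - p) * \<bar>Y\<bar>"
    using assms(5,6) by (metis abs_mult abs_of_nonneg abs_triangle_ineq diff_ge_0_iff_ge)
  also have "\<dots> \<le> p * K + (1 - p) * K"
    using A B assms(5,6) unfolding X_def Y_def by (intro add_mono mult_left_mono) auto
  also have "p * K + (1 - p) * K = K" by (simp add: algebra_simps)
  finally show ?thesis unfolding K_def .
qed

lemma Gf_cont:
  assumes f: "f \<in> Finf sl su" and "0 < sl" "sl < su" "su < 1"
    and cc: "-1 < cc" "cc < u" "-v < cc" "cc < 1"
    and mu: "\<And>j. mu j \<in> Eset sl su u v cc" and lim: "mu \<longlonglongrightarrow> l"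
  shows "(\<lambda>j. Gf sl su p u v f (mu j) cc) \<longlonglongrightarrow> Gf sl su p u v f l cc"
    and "mfun u l cc \<in> {sl..su}" "mmfun v l cc \<in> {sl..su}"
proof -
  have mpos: "mu j > 0" for j using mu[of j] by (simp add: Eset_def)
  have l0: "l \<ge> 0" using lim mpos by (intro tendsto_lowerbound[OF lim]) (auto intro: less_imp_le always_eventually)
  have d1: "l * (1 + cc) + (u - cc) \<noteq> 0" using l0 cc
    by (metis add_nonneg_pos diff_gt_0_iff_gt less_numeral_extra(3) mult_nonneg_nonneg neg_less_iff_less add.commute
        diff_minus_eq_add less_eq_real_def linorder_not_le minus_diff_eq)
  have d2: "l * (1 - cc) + (v + cc) \<noteq> 0" using l0 cc
    by (smt (verit) mult_nonneg_nonneg)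
  have m1: "(\<lambda>j. mfun u (mu j) cc) \<longlonglongrightarrow> mfun u l cc"
    unfolding mfun_def by (intro tendsto_intros lim d1)
  have m2: "(\<lambda>j. mmfun v (mu j) cc) \<longlonglongrightarrow> mmfun v l cc"
    unfolding mmfun_def by (intro tendsto_intros lim d2)
  have in1: "mfun u (mu j) cc \<in> {sl..su}" for j using mu[of j] by (auto simp: Eset_def)
  have in2: "mmfun v (mu j) cc \<in> {sl..su}" for j using mu[of j] by (auto simp: Eset_def)
  show l1: "mfun u l cc \<in> {sl..su}" using in1
    by (auto intro!: tendsto_lowerbound[OF m1] tendsto_upperbound[OF m1])
  show l2: "mmfun v l cc \<in> {sl..su}" using in2
    by (auto intro!: tendsto_lowerbound[OF m2] tendsto_upperbound[OF m2])
  have fi: "(\<lambda>s. f s * (1 - 2 * s) / s) integrable_on {sl..su}" using f by (simp add: Finf_def)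
  have c1: "(\<lambda>j. integral {sl..mfun u (mu j) cc} (\<lambda>s. f s * (1 - 2 * s) / s))
      \<longlonglongrightarrow> integral {sl..mfun u l cc} (\<lambda>s. f s * (1 - 2 * s) / s)"
    using continuous_on_tendsto_compose[OF indefinite_integral_continuous_1[OF fi] m1 l1] in1
    by (simp add: o_def)
  have c2: "(\<lambda>j. integral {mmfun v (mu j) cc..su} (\<lambda>s. f s * (1 - 2 * s) / s))
      \<longlonglongrightarrow> integral {mmfun v l cc..su} (\<lambda>s. f s * (1 - 2 * s) / s)"
    using continuous_on_tendsto_compose[OF indefinite_integral_continuous_1'[OF fi] m2 l2] in2
    by (simp add: o_def)
  show "(\<lambda>j. Gf sl su p u v f (mu j) cc) \<longlonglongrightarrow> Gf sl su p u v f l cc"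
    unfolding Gf_def by (intro tendsto_intros c1 c2)
qed


theorem proposition7:
  fixes sl su p u v eps0 :: real and n :: nat and f :: "real \<Rightarrow> real"
  assumes "0 < sl" "sl < su" "su < 1"
    and "0 < p" "p < 1"
    and "0 < u" "0 < v" "u \<noteq> v"
    and "Eset sl su u v 0 \<noteq> {}"
    and "eps0 > 0" and "n > 0"
    and "f \<in> linf_closure sl su (Fn sl su p u v eps0 n)"
  shows "\<exists>S. S \<subseteq> Ceps sl su u v eps0 \<and> S \<in> sets lebesgue \<and>
           emeasure lebesgue S \<ge> ennreal (1 / real n) \<and>
           (\<forall>c\<in>S. \<exists>lam \<in> closure (Eset sl su u v 0) \<inter> closure (Eset sl su u v c).
              Gf sl su p u v f lam 0 = 0 \<and> Gf sl su p u v f lam c = 0)"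
proof -
  have fF: "f \<in> Finf sl su" using assms(12) by (simp add: linf_closure_def)
  have "\<forall>k::nat. \<exists>h\<in>Fn sl su p u v eps0 n. linf_dist sl su f h < 1 / (real k + 1)"
    using assms(12) unfolding linf_closure_def by auto
  then obtain g where g: "\<And>k. g k \<in> Fn sl su p u v eps0 n"
      "\<And>k. linf_dist sl su f (g k) < 1 / (real k + 1)" by metis
  have gF: "g k \<in> Finf sl su" for k using g(1)[of k] by (simp add: Fn_def)
  define S where "S k = stationary_set sl su p u v eps0 (g k)" for k
  have Smeas: "S k \<in> sets lebesgue" for k using g(1)[of k] unfolding Fn_def S_def by blast
  have Sge: "emeasure lebesgue (S k) \<ge> ennreal (1 / real n)" for k using g(1)[of k] unfolding Fn_def S_def by blast
  have Ssub: "S k \<subseteq> Ceps sl su u v eps0" for k by (auto simp: S_def stationary_set_def)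
  have Cb: "Ceps sl su u v eps0 \<subseteq> {-1<..<1}" by (auto simp: Ceps_def Cset_def)
  define T where "T N = (\<Union>k\<in>{N..}. S k)" for N
  define S0 where "S0 = (\<Inter>N. T N)"
  have Tmeas: "T N \<in> sets lebesgue" for N unfolding T_def using Smeas by auto
  have S0meas: "S0 \<in> sets lebesgue" unfolding S0_def using Tmeas by auto
  have Tsub: "T N \<subseteq> {-1<..<1}" for N using Ssub Cb unfolding T_def by blast
  have Tfin: "emeasure lebesgue (T N) \<noteq> \<infinity>" for N
  proof -
    have "emeasure lebesgue (T N) \<le> emeasure lebesgue {-1<..<(1::real)}"
      by (rule emeasure_mono[OF Tsub]) auto
    also have "\<dots> = 2" by simp
    finally show ?thesis by (auto simp: top_unique)
  qed
  have dec: "decseq T" unfolding T_def decseq_def by (auto; meson atLeast_iff order_trans)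
  have "(INF N. emeasure lebesgue (T N)) = emeasure lebesgue S0"
    unfolding S0_def by (rule INF_emeasure_decseq) (use Tmeas dec Tfin in auto)
  moreover have "ennreal (1 / real n) \<le> (INF N. emeasure lebesgue (T N))"
  proof (rule INF_greatest)
    fix N
    have "S N \<subseteq> T N" unfolding T_def by auto
    then have "emeasure lebesgue (S N) \<le> emeasure lebesgue (T N)" by (rule emeasure_mono) (rule Tmeas)
    then show "ennreal (1 / real n) \<le> emeasure lebesgue (T N)" using Sge[of N] by order
  qed
  ultimately have S0ge: "ennreal (1 / real n) \<le> emeasure lebesgue S0" by simp
  have S0sub: "S0 \<subseteq> Ceps sl su u v eps0" unfolding S0_def T_def using Ssub by blast
  have "\<forall>c\<in>S0. \<exists>lam \<in> closure (Eset sl su u v 0) \<inter> closure (Eset sl su u v c).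
              Gf sl su p u v f lam 0 = 0 \<and> Gf sl su p u v f lam c = 0"
  proof
    fix c assume c: "c \<in> S0"
    have cC: "c \<in> Ceps sl su u v eps0" using c S0sub by auto
    then have cr: "-1 < c" "c < u" "-v < c" "c < 1" by (auto simp: Ceps_def Cset_def)
    have "\<forall>N. \<exists>k\<ge>N. c \<in> S k" using c unfolding S0_def T_def by auto
    then have "\<exists>t. \<forall>N. t N \<ge> N \<and> c \<in> S (t N)" by (rule choice)
    then obtain t where t0: "\<forall>N. t N \<ge> N \<and> c \<in> S (t N)" by blast
    have t: "\<And>N. t N \<ge> N" "\<And>N. c \<in> S (t N)" using t0 by auto
    have exlam: "\<forall>N. \<exists>lam \<in> Eset sl su u v 0 \<inter> Eset sl su u v c.
       Gf sl su p u v (g (t N)) lam 0 = 0 \<and> Gf sl su p u v (g (t N)) lam c = 0"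
    proof
      fix N show "\<exists>lam \<in> Eset sl su u v 0 \<inter> Eset sl su u v c.
       Gf sl su p u v (g (t N)) lam 0 = 0 \<and> Gf sl su p u v (g (t N)) lam c = 0"
        using t(2)[of N] unfolding S_def stationary_set_def by blast
    qed
    then obtain lam where lam: "\<And>N. lam N \<in> Eset sl su u v 0" "\<And>N. lam N \<in> Eset sl su u v c"
       "\<And>N. Gf sl su p u v (g (t N)) (lam N) 0 = 0" "\<And>N. Gf sl su p u v (g (t N)) (lam N) c = 0"
    proof -
      from exlam have "\<forall>N. \<exists>lm. lm \<in> Eset sl su u v 0 \<inter> Eset sl su u v c \<and>
         Gf sl su p u v (g (t N)) lm 0 = 0 \<and> Gf sl su p u v (g (t N)) lm c = 0"
        by (simp add: Bex_def)
      then have "\<exists>lam. \<forall>N. lam N \<in> Eset sl su u v 0 \<inter> Eset sl su u v c \<and>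
         Gf sl su p u v (g (t N)) (lam N) 0 = 0 \<and> Gf sl su p u v (g (t N)) (lam N) c = 0"
        by (rule choice)
      then show ?thesis using that by auto
    qed
    define B where "B = su * u / (1 - su)"
    have lamB: "lam N \<in> {0..B}" for N
    proof -
      have pos: "lam N > 0" and m: "lam N / (lam N + u) < su"
        using lam(1)[of N] by (auto simp: Eset_def mfun_def)
      have "lam N < su * (lam N + u)" using m pos assms(6) by (simp add: divide_less_eq)
      then have "lam N * (1 - su) < su * u" by (simp add: algebra_simps)
      then have "lam N < B" unfolding B_def using assms(3) by (simp add: less_divide_eq)
      then show ?thesis using pos by auto
    qed
    obtain l r where lr: "l \<in> {0..B}" "strict_mono (r :: nat \<Rightarrow> nat)" "(lam \<circ> r) \<longlonglongrightarrow> l"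
    proof -
      have "\<forall>n. lam n \<in> {0..B}" using lamB by blast
      show ?thesis by (rule seq_compactE[OF compact_imp_seq_compact[OF compact_Icc] \<open>\<forall>n. lam n \<in> {0..B}\<close>]) (rule that)
    qed
    define mu where "mu = lam \<circ> r"
    have mu_lim: "mu \<longlonglongrightarrow> l" using lr(3) by (simp add: mu_def)
    have key: "Gf sl su p u v f l cc = 0"
      if ccr: "-1 < cc" "cc < u" "-v < cc" "cc < 1" and muE: "\<And>j. mu j \<in> Eset sl su u v cc"
        and z: "\<And>j. Gf sl su p u v (g (t (r j))) (mu j) cc = 0" for cc
    proof -
      have lim1: "(\<lambda>j. Gf sl su p u v f (mu j) cc) \<longlonglongrightarrow> Gf sl su p u v f l cc"
        by (rule Gf_cont(1)[OF fF assms(1-3) ccr muE mu_lim])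
      define K where "K = (su - sl) / sl"
      have K0: "K \<ge> 0" unfolding K_def using assms by auto
      have bnd: "norm (Gf sl su p u v f (mu j) cc) \<le> K * (1 / (real j + 1))" for j
      proof -
        have in1: "mfun u (mu j) cc \<in> {sl..su}" "mmfun v (mu j) cc \<in> {sl..su}"
          using muE[of j] by (auto simp: Eset_def)
        have p01: "0 \<le> p" "p \<le> 1" using assms(4,5) by auto
        have b: "\<bar>Gf sl su p u v (g (t (r j))) (mu j) cc - Gf sl su p u v f (mu j) cc\<bar>
            \<le> linf_dist sl su f (g (t (r j))) * (su - sl) / sl"
          by (rule Gf_bound[OF fF gF assms(1) assms(3) p01 in1])
        have e1: "linf_dist sl su f (g (t (r j))) * (su - sl) / sl = linf_dist sl su f (g (t (r j))) * K"
          unfolding K_def by simp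
        have e2: "\<bar>Gf sl su p u v (g (t (r j))) (mu j) cc - Gf sl su p u v f (mu j) cc\<bar> = norm (Gf sl su p u v f (mu j) cc)"
          using z[of j] by simp
        have a: "norm (Gf sl su p u v f (mu j) cc) \<le> linf_dist sl su f (g (t (r j))) * K"
          using b unfolding e1 e2 .
        have "j \<le> t (r j)" using t(1)[of "r j"] seq_suble[OF lr(2), of j] by linarith
        then have "1 / (real (t (r j)) + 1) \<le> 1 / (real j + 1)" by (intro divide_left_mono) auto
        then have "linf_dist sl su f (g (t (r j))) \<le> 1 / (real j + 1)" using g(2)[of "t (r j)"] by linarith
        then have "linf_dist sl su f (g (t (r j))) * K \<le> 1 / (real j + 1) * K" using K0 by (rule mult_right_mono)
        then show ?thesis using a by (simp add: mult.commute)
      qed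
      have h: "(\<lambda>j. 1 / (real j + 1)) \<longlonglongrightarrow> 0"
        using LIMSEQ_inverse_real_of_nat by (simp add: inverse_eq_divide add.commute)
      have "(\<lambda>j. K * (1 / (real j + 1))) \<longlonglongrightarrow> K * 0"
        by (rule tendsto_mult[OF tendsto_const h])
      then have h2: "(\<lambda>j. K * (1 / (real j + 1))) \<longlonglongrightarrow> 0" by simp
      have ev: "\<forall>\<^sub>F j in sequentially. norm (Gf sl su p u v f (mu j) cc) \<le> K * (1 / (real j + 1))"
        using bnd by (intro always_eventually allI)
      have lim2: "(\<lambda>j. Gf sl su p u v f (mu j) cc) \<longlonglongrightarrow> 0"
        by (rule Lim_null_comparison[OF ev h2])
      show ?thesis using LIMSEQ_unique[OF lim1 lim2] .
    qed
    have k0: "Gf sl su p u v f l 0 = 0"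
      by (rule key) (use assms(6,7) lam(1,3) in \<open>auto simp: mu_def\<close>)
    have kc: "Gf sl su p u v f l c = 0"
      by (rule key) (use cr lam(2,4) in \<open>auto simp: mu_def\<close>)
    have cl0: "l \<in> closure (Eset sl su u v 0)"
      proof -
      have "\<forall>j. mu j \<in> Eset sl su u v 0" unfolding mu_def using lam(1) by simp
      then show ?thesis unfolding closure_sequential using mu_lim by (intro exI[of _ mu] conjI) simp_all
    qed
    have clc: "l \<in> closure (Eset sl su u v c)"
      proof -
      have "\<forall>j. mu j \<in> Eset sl su u v c" unfolding mu_def using lam(2) by simp
      then show ?thesis unfolding closure_sequential using mu_lim by (intro exI[of _ mu] conjI) simp_all
    qed
    show "\<exists>lam \<in> closure (Eset sl su u v 0) \<inter> closure (Eset sl su u v c).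
              Gf sl su p u v f lam 0 = 0 \<and> Gf sl su p u v f lam c = 0"
      using cl0 clc k0 kc by blast
  qed
  then show ?thesis using S0sub S0meas S0ge by blast
qed

end
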